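(* Let $X$ be a bounded geometry metric space that does not have the operator norm localization property. Then there exist $R>0$, $\kappa<1$, a sequence $(T_n)$ of operators in $\mathbb{C}_R[X]$, a sequence $(B_n)$ of finite subsets of $X$, and a sequence $(S_n)$ of positive real numbers such that: (a) $(S_n)$ is increasing and $S_n\to\infty$; (b) each $T_n$ is positive and of norm one; (c) $B_n\cap B_m=\emptyset$ for $n\ne m$; (d) if $P_n:\ell^2(X)\to\ell^2(B_n)$ is the orthogonal projection, then $P_nT_nP_n=T_n$; (e) for each $n$ and every $\xi\in\ell^2(X)$ with $\|\xi\|=1$ and $\operatorname{diam}(\operatorname{Supp}(\xi))\le S_n$, one has $\|T_n\xi\|\le\kappa$.
   Context: A metric space $X$ has bounded geometry if for each $R>0$ there is $N$ such that every ball of radius $R$ contains at most $N$ points. With $\{\delta_x\}$ the standard basis of $\ell^2(X)$ and $T_{xy}=\langle\delta_x,T\delta_y\rangle$, the propagation of a bounded operator $T$ is $\sup\{d(x,y):T_{xy}\neq0\}$, and $\mathbb{C}_R[X]$ is the set of bounded operators on $\ell^2(X)$ of propagation at most $R$. $X$ has the operator norm localization property (ONL) if for all $R\ge0$ and $c\in(0,1)$ there exists $S>0$ such that for every $T\in\mathbb{C}_R[X]$ of norm one there is $\xi\in\ell^2(X)$ of norm one with $\operatorname{diam}(\operatorname{Supp}(\xi))\le S$ and $\|T\xi\|\ge c$. *)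

theory Defs
  imports "HOL-Analysis.Analysis"
begin

text \<open>The metric space X is the carrier UNIV of a type 'a :: metric_space.
  A bounded operator T on l2(X) is represented by its matrix
  T x y = <delta_x, T delta_y>; it acts by (T xi)(x) = sum_y T x y * xi y.\<close>

definition bounded_geometry :: "'a::metric_space itself \<Rightarrow> bool" where
  "bounded_geometry _ \<longleftrightarrow>
     (\<forall>R>0. \<exists>N::nat. \<forall>x::'a. finite (cball x R) \<and> card (cball x R) \<le> N)"

definition l2 :: "('a \<Rightarrow> complex) \<Rightarrow> bool" where
  "l2 \<xi> \<longleftrightarrow> (\<lambda>x. (cmod (\<xi> x))\<^sup>2) summable_on UNIV"

definition l2norm :: "('a \<Rightarrow> complex) \<Rightarrow> real" where
  "l2norm \<xi> = sqrt (\<Sum>\<^sub>\<infinity>x. (cmod (\<xi> x))\<^sup>2)"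

definition l2inner :: "('a \<Rightarrow> complex) \<Rightarrow> ('a \<Rightarrow> complex) \<Rightarrow> complex" where
  "l2inner \<xi> \<eta> = (\<Sum>\<^sub>\<infinity>x. cnj (\<xi> x) * \<eta> x)"

definition supp :: "('a \<Rightarrow> complex) \<Rightarrow> 'a set" where
  "supp \<xi> = {x. \<xi> x \<noteq> 0}"

text \<open>diam(A) \<le> S, written out (avoids junk values of diameter on unbounded sets).\<close>
definition diam_le :: "'a::metric_space set \<Rightarrow> real \<Rightarrow> bool" where
  "diam_le A S \<longleftrightarrow> (\<forall>x\<in>A. \<forall>y\<in>A. dist x y \<le> S)"

definition op_apply :: "('a \<Rightarrow> 'a \<Rightarrow> complex) \<Rightarrow> ('a \<Rightarrow> complex) \<Rightarrow> ('a \<Rightarrow> complex)" where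
  "op_apply T \<xi> = (\<lambda>x. \<Sum>\<^sub>\<infinity>y. T x y * \<xi> y)"

definition bounded_op :: "('a \<Rightarrow> 'a \<Rightarrow> complex) \<Rightarrow> bool" where
  "bounded_op T \<longleftrightarrow>
     (\<forall>\<xi>. l2 \<xi> \<longrightarrow> (\<forall>x. (\<lambda>y. T x y * \<xi> y) summable_on UNIV) \<and> l2 (op_apply T \<xi>)) \<and>
     (\<exists>C. \<forall>\<xi>. l2 \<xi> \<longrightarrow> l2norm (op_apply T \<xi>) \<le> C * l2norm \<xi>)"

definition opnorm :: "('a \<Rightarrow> 'a \<Rightarrow> complex) \<Rightarrow> real" where
  "opnorm T = Sup {l2norm (op_apply T \<xi>) | \<xi>. l2 \<xi> \<and> l2norm \<xi> \<le> 1}"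

definition positive_op :: "('a \<Rightarrow> 'a \<Rightarrow> complex) \<Rightarrow> bool" where
  "positive_op T \<longleftrightarrow> bounded_op T \<and>
     (\<forall>\<xi>. l2 \<xi> \<longrightarrow> Im (l2inner \<xi> (op_apply T \<xi>)) = 0 \<and> Re (l2inner \<xi> (op_apply T \<xi>)) \<ge> 0)"

definition propagation_le :: "('a::metric_space \<Rightarrow> 'a \<Rightarrow> complex) \<Rightarrow> real \<Rightarrow> bool" where
  "propagation_le T R \<longleftrightarrow> (\<forall>x y. T x y \<noteq> 0 \<longrightarrow> dist x y \<le> R)"

definition CR :: "real \<Rightarrow> ('a::metric_space \<Rightarrow> 'a \<Rightarrow> complex) set" where
  "CR R = {T. bounded_op T \<and> propagation_le T R}"

definition proj :: "'a set \<Rightarrow> ('a \<Rightarrow> 'a \<Rightarrow> complex)" where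
  "proj B = (\<lambda>x y. if x = y \<and> x \<in> B then 1 else 0)"

definition ONL :: "'a::metric_space itself \<Rightarrow> bool" where
  "ONL _ \<longleftrightarrow>
     (\<forall>R\<ge>0. \<forall>c. 0 < c \<and> c < 1 \<longrightarrow> (\<exists>S>0. \<forall>T::'a \<Rightarrow> 'a \<Rightarrow> complex.
        T \<in> CR R \<and> opnorm T = 1 \<longrightarrow>
        (\<exists>\<xi>. l2 \<xi> \<and> l2norm \<xi> = 1 \<and> diam_le (supp \<xi>) S \<and> l2norm (op_apply T \<xi>) \<ge> c)))"

end

theory Submission
  imports Defs
begin


definition rs :: "'a set \<Rightarrow> ('a \<Rightarrow> complex) \<Rightarrow> ('a \<Rightarrow> complex)" where
  "rs B v = (\<lambda>x. if x \<in> B then v x else 0)"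

definition nsq :: "'a set \<Rightarrow> ('a \<Rightarrow> complex) \<Rightarrow> real" where
  "nsq A v = (\<Sum>x\<in>A. (cmod (v x))\<^sup>2)"

lemma infsum_fin:
  fixes f :: "'a \<Rightarrow> 'b::{comm_monoid_add,t2_space}"
  assumes "finite A" "\<And>x. x \<notin> A \<Longrightarrow> f x = 0"
  shows "infsum f UNIV = sum f A"
proof -
  have "infsum f UNIV = infsum f A"
    by (rule infsum_cong_neutral) (use assms in auto)
  then show ?thesis using assms(1) by simp
qed

lemma summable_fin:
  fixes f :: "'a \<Rightarrow> 'b::{comm_monoid_add,t2_space}"
  assumes "finite A" "\<And>x. x \<notin> A \<Longrightarrow> f x = 0"
  shows "f summable_on UNIV"
proof -
  have "f summable_on UNIV \<longleftrightarrow> f summable_on A"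
    by (rule summable_on_cong_neutral) (use assms in auto)
  then show ?thesis using assms(1) by simp
qed

lemma l2_fin:
  assumes "finite A" "supp v \<subseteq> A"
  shows "l2 v" "l2norm v = sqrt (nsq A v)" "(l2norm v)\<^sup>2 = nsq A v"
proof -
  have z: "\<And>x. x \<notin> A \<Longrightarrow> (cmod (v x))\<^sup>2 = 0" using assms(2) by (auto simp: supp_def)
  show "l2 v" unfolding l2_def by (rule summable_fin[OF assms(1)]) (use z in auto)
  show e: "l2norm v = sqrt (nsq A v)" unfolding l2norm_def nsq_def
    by (subst infsum_fin[OF assms(1)]) (use z in auto)
  show "(l2norm v)\<^sup>2 = nsq A v" unfolding e by (simp add: nsq_def sum_nonneg)
qed

lemma nsq_le_l2norm:
  assumes "l2 v" "finite K"
  shows "nsq K v \<le> (l2norm v)\<^sup>2"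
proof -
  have "nsq K v \<le> (\<Sum>\<^sub>\<infinity>x. (cmod (v x))\<^sup>2)" unfolding nsq_def
    by (rule finite_sum_le_infsum) (use assms in \<open>auto simp: l2_def\<close>)
  moreover have "0 \<le> (\<Sum>\<^sub>\<infinity>x. (cmod (v x))\<^sup>2)" by (simp add: infsum_nonneg)
  ultimately show ?thesis unfolding l2norm_def by simp
qed

lemma l2norm_nonneg: "0 \<le> l2norm v"
  unfolding l2norm_def by (simp add: infsum_nonneg)

lemma supp_rs: "supp (rs B v) \<subseteq> B \<inter> supp v"
  by (auto simp: supp_def rs_def)

lemma nsq_rs: "finite A \<Longrightarrow> nsq A (rs B v) = nsq (A \<inter> B) v"
  unfolding nsq_def rs_def by (simp add: sum.inter_restrict) (intro sum.cong, auto)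

lemma l2norm_rs_le:
  assumes "l2 v" "finite B"
  shows "l2norm (rs B v) \<le> l2norm v"
proof -
  have "(l2norm (rs B v))\<^sup>2 = nsq B (rs B v)" using l2_fin(3)[OF assms(2) order_trans[OF supp_rs Int_lower1]] .
  also have "\<dots> = nsq B v" by (simp add: nsq_rs assms)
  also have "\<dots> \<le> (l2norm v)\<^sup>2" by (rule nsq_le_l2norm[OF assms])
  finally show ?thesis using l2norm_nonneg[of v] by (rule power2_le_imp_le)
qed

lemma l2_rs: "finite B \<Longrightarrow> l2 (rs B v)"
  using l2_fin(1)[OF _ order_trans[OF supp_rs Int_lower1]] .

lemma l2_scale:
  assumes "l2 v" shows "l2 (\<lambda>x. v x / s)"
proof -
  have "(\<lambda>x. (cmod (v x))\<^sup>2 * (1 / (cmod s)\<^sup>2)) summable_on UNIV"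
    using assms unfolding l2_def by (rule summable_on_cmult_left)
  moreover have "\<And>x. (cmod (v x))\<^sup>2 * (1 / (cmod s)\<^sup>2) = (cmod (v x / s))\<^sup>2"
    by (simp add: norm_divide power_divide)
  ultimately show ?thesis unfolding l2_def by simp
qed

lemma l2norm_scale:
  "l2norm (\<lambda>x. v x / s) = l2norm v / cmod s"
proof -
  have "(\<Sum>\<^sub>\<infinity>x. (cmod (v x / s))\<^sup>2) = (\<Sum>\<^sub>\<infinity>x. (cmod (v x))\<^sup>2 * (1 / (cmod s)\<^sup>2))"
    by (simp add: norm_divide power_divide)
  also have "\<dots> = (\<Sum>\<^sub>\<infinity>x. (cmod (v x))\<^sup>2) * (1 / (cmod s)\<^sup>2)"
    by (rule infsum_cmult_left')
  finally show ?thesis unfolding l2norm_def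
    by (simp add: real_sqrt_mult real_sqrt_divide)
qed

lemma op_apply_scale:
  "op_apply T (\<lambda>x. v x / s) = (\<lambda>x. op_apply T v x / s)"
proof
  fix x
  have "(\<Sum>\<^sub>\<infinity>y. T x y * (v y / s)) = (\<Sum>\<^sub>\<infinity>y. T x y * v y * (1/s))"
    by simp
  also have "\<dots> = (\<Sum>\<^sub>\<infinity>y. T x y * v y) * (1/s)" by (rule infsum_cmult_left')
  finally show "op_apply T (\<lambda>x. v x / s) x = op_apply T v x / s"
    unfolding op_apply_def by simp
qed

lemma op_apply_mscale:
  "op_apply (\<lambda>x y. T x y / s) v = (\<lambda>x. op_apply T v x / s)"
proof
  fix x
  have "(\<Sum>\<^sub>\<infinity>y. T x y / s * v y) = (\<Sum>\<^sub>\<infinity>y. T x y * v y * (1/s))"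
    by simp
  also have "\<dots> = (\<Sum>\<^sub>\<infinity>y. T x y * v y) * (1/s)" by (rule infsum_cmult_left')
  finally show "op_apply (\<lambda>x y. T x y / s) v x = op_apply T v x / s"
    unfolding op_apply_def by simp
qed

lemma l2norm_zero: "l2norm (\<lambda>x. 0) = 0"
  unfolding l2norm_def by simp

lemma opnorm_bdd:
  assumes "bounded_op T"
  shows "bdd_above {l2norm (op_apply T \<xi>) | \<xi>. l2 \<xi> \<and> l2norm \<xi> \<le> 1}"
proof -
  obtain C where C: "\<And>\<xi>. l2 \<xi> \<Longrightarrow> l2norm (op_apply T \<xi>) \<le> C * l2norm \<xi>"
    using assms unfolding bounded_op_def by blast
  show ?thesis
  proof (rule bdd_aboveI)
    fix t assume "t \<in> {l2norm (op_apply T \<xi>) | \<xi>. l2 \<xi> \<and> l2norm \<xi> \<le> 1}"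
    then obtain \<xi> where "l2 \<xi>" "l2norm \<xi> \<le> 1" "t = l2norm (op_apply T \<xi>)" by auto
    moreover have "C * l2norm \<xi> \<le> \<bar>C\<bar>"
      using \<open>l2norm \<xi> \<le> 1\<close> l2norm_nonneg[of \<xi>]
      by (meson abs_ge_self abs_ge_zero mult_left_le mult_right_mono order_trans)
    ultimately show "t \<le> \<bar>C\<bar>" using C[of \<xi>] by linarith
  qed
qed

lemma op_le:
  assumes "bounded_op T" "l2 \<xi>"
  shows "l2norm (op_apply T \<xi>) \<le> opnorm T * l2norm \<xi>"
proof (cases "l2norm \<xi> = 0")
  case True
  obtain C where C: "\<And>\<xi>. l2 \<xi> \<Longrightarrow> l2norm (op_apply T \<xi>) \<le> C * l2norm \<xi>"
    using assms unfolding bounded_op_def by blast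
  show ?thesis using C[OF assms(2)] True l2norm_nonneg[of "op_apply T \<xi>"] by simp
next
  case False
  define s where "s = l2norm \<xi>"
  have s: "s > 0" using False l2norm_nonneg[of \<xi>] s_def by simp
  define \<eta> where "\<eta> = (\<lambda>x. \<xi> x / complex_of_real s)"
  have "l2 \<eta>" unfolding \<eta>_def by (rule l2_scale[OF assms(2)])
  have "l2norm \<eta> = 1" unfolding \<eta>_def l2norm_scale using s s_def by simp
  have "l2norm (op_apply T \<eta>) = l2norm (op_apply T \<xi>) / s"
    unfolding \<eta>_def op_apply_scale l2norm_scale using s by simp
  moreover have "l2norm (op_apply T \<eta>) \<le> opnorm T"
    unfolding opnorm_def
    by (rule cSup_upper) (use \<open>l2 \<eta>\<close> \<open>l2norm \<eta> = 1\<close> opnorm_bdd[OF assms(1)] in auto)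
  ultimately show ?thesis using s unfolding s_def by (simp add: divide_le_eq mult.commute)
qed



lemma opfin_gen:
  assumes "finite G" "\<And>x y. y \<notin> G \<Longrightarrow> T x y * \<xi> y = 0"
  shows "op_apply T \<xi> = (\<lambda>x. \<Sum>y\<in>G. T x y * \<xi> y)"
    "\<And>x. (\<lambda>y. T x y * \<xi> y) summable_on UNIV"
proof -
  show "op_apply T \<xi> = (\<lambda>x. \<Sum>y\<in>G. T x y * \<xi> y)"
    unfolding op_apply_def by (rule ext, rule infsum_fin) (use assms in auto)
  show "\<And>x. (\<lambda>y. T x y * \<xi> y) summable_on UNIV"
    by (rule summable_fin) (use assms in auto)
qed

lemma opfin_supp:
  assumes "finite G" "supp \<xi> \<subseteq> G"
  shows "op_apply T \<xi> = (\<lambda>x. \<Sum>y\<in>G. T x y * \<xi> y)"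
  by (rule opfin_gen(1)[OF assms(1)]) (use assms(2) in \<open>auto simp: supp_def\<close>)

definition fm :: "'a set \<Rightarrow> ('a \<Rightarrow> 'a \<Rightarrow> complex) \<Rightarrow> bool" where
  "fm B K \<longleftrightarrow> finite B \<and> (\<forall>x y. K x y \<noteq> 0 \<longrightarrow> x \<in> B \<and> y \<in> B)"

lemma fm_apply:
  assumes "fm B K"
  shows "op_apply K \<xi> = (\<lambda>x. \<Sum>y\<in>B. K x y * \<xi> y)"
    "\<And>x. (\<lambda>y. K x y * \<xi> y) summable_on UNIV"
  using opfin_gen[of B K \<xi>] assms unfolding fm_def by auto

lemma fm_supp:
  assumes "fm B K" shows "supp (op_apply K \<xi>) \<subseteq> B"
proof
  fix x assume "x \<in> supp (op_apply K \<xi>)"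
  then have "(\<Sum>y\<in>B. K x y * \<xi> y) \<noteq> 0" using fm_apply(1)[OF assms] by (simp add: supp_def)
  then obtain y where "K x y * \<xi> y \<noteq> 0" by (meson sum.neutral)
  then show "x \<in> B" using assms unfolding fm_def by auto
qed

lemma fm_rs:
  assumes "fm B K" shows "op_apply K (rs B \<xi>) = op_apply K \<xi>"
  unfolding fm_apply[OF assms] rs_def by (intro ext sum.cong) auto

lemma fm_l2:
  assumes "fm B K" shows "l2 (op_apply K \<xi>)"
  using l2_fin(1)[OF _ fm_supp[OF assms]] assms unfolding fm_def by blast

lemma fm_bounded:
  assumes "fm B K" "\<And>\<xi>. l2 \<xi> \<Longrightarrow> l2norm (op_apply K \<xi>) \<le> L * l2norm \<xi>"
  shows "bounded_op K"
  unfolding bounded_op_def using fm_apply(2)[OF assms(1)] fm_l2[OF assms(1)] assms(2) by blast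

lemma proj_apply: "op_apply (proj B) v = rs B v"
proof
  fix x
  show "op_apply (proj B) v x = rs B v x"
    unfolding op_apply_def proj_def rs_def
    by (subst infsum_fin[of "{x}"]) auto
qed

lemma rs_supp: "supp v \<subseteq> B \<Longrightarrow> rs B v = v"
  unfolding rs_def supp_def by (rule ext) auto

lemma CS_fin:
  assumes "finite B" "supp v \<subseteq> B" "l2 u"
  shows "cmod (\<Sum>x\<in>B. cnj (u x) * v x) \<le> l2norm u * l2norm v"
proof -
  have "cmod (\<Sum>x\<in>B. cnj (u x) * v x) \<le> (\<Sum>x\<in>B. cmod (cnj (u x) * v x))"
    by (rule norm_sum)
  also have "\<dots> = (\<Sum>x\<in>B. \<bar>cmod (u x)\<bar> * \<bar>cmod (v x)\<bar>)" by (simp add: norm_mult)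
  also have "\<dots> \<le> L2_set (\<lambda>x. cmod (u x)) B * L2_set (\<lambda>x. cmod (v x)) B"
    by (rule L2_set_mult_ineq)
  also have "\<dots> \<le> l2norm u * l2norm v"
  proof (rule mult_mono)
    have "L2_set (\<lambda>x. cmod (u x)) B = sqrt (nsq B u)" unfolding L2_set_def nsq_def ..
    also have "\<dots> \<le> sqrt ((l2norm u)\<^sup>2)" using nsq_le_l2norm[OF assms(3,1)] by (rule real_sqrt_le_mono)
    also have "\<dots> = l2norm u" using l2norm_nonneg[of u] by simp
    finally show "L2_set (\<lambda>x. cmod (u x)) B \<le> l2norm u" .
    show "L2_set (\<lambda>x. cmod (v x)) B \<le> l2norm v"
      using l2_fin(2)[OF assms(1,2)] unfolding L2_set_def nsq_def by simp
  qed (auto simp: l2norm_nonneg)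
  finally show ?thesis .
qed

lemma l2inner_fin:
  assumes "finite B" "supp v \<subseteq> B"
  shows "l2inner u v = (\<Sum>x\<in>B. cnj (u x) * v x)"
  unfolding l2inner_def by (rule infsum_fin) (use assms in \<open>auto simp: supp_def\<close>)



lemma supp_rs': "supp (rs B v) \<subseteq> B"
  unfolding supp_def rs_def by auto

lemma supp_rs2: "supp (rs B v) \<subseteq> supp v"
  unfolding supp_def rs_def by auto

lemma diam_le_subset: "diam_le A S \<Longrightarrow> A' \<subseteq> A \<Longrightarrow> diam_le A' S"
  unfolding diam_le_def by blast

lemma diam_le_mono: "diam_le A S \<Longrightarrow> S \<le> S' \<Longrightarrow> diam_le A S'"
  unfolding diam_le_def by force

lemma l2_zero: "l2 (\<lambda>x::'a. 0::complex)" "l2norm (\<lambda>x::'a. 0::complex) = 0"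
  using l2_fin[of "{}" "\<lambda>x. 0"] by (auto simp: supp_def nsq_def)

locale sett =
  fixes T :: "'a::metric_space \<Rightarrow> 'a \<Rightarrow> complex" and R0 :: real
  assumes bg: "bounded_geometry TYPE('a)" and R0: "R0 \<ge> 0" and hprop: "propagation_le T R0"
    and bdd: "bounded_op T" and nrm: "opnorm T = 1"
begin

lemma contr: "l2 \<xi> \<Longrightarrow> l2norm (op_apply T \<xi>) \<le> l2norm \<xi>"
  using op_le[OF bdd] nrm by simp

lemma l2T: "l2 \<xi> \<Longrightarrow> l2 (op_apply T \<xi>)"
  using bdd unfolding bounded_op_def by blast

lemma build:
  fixes B :: "'a set" and \<xi>0 :: "'a \<Rightarrow> complex" and t c Sp :: real
  assumes B: "finite B" and s0: "supp \<xi>0 \<subseteq> B" and s1: "supp (op_apply T \<xi>0) \<subseteq> B"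
    and pos: "l2norm \<xi>0 > 0" and big: "t * (l2norm \<xi>0)\<^sup>2 \<le> (l2norm (op_apply T \<xi>0))\<^sup>2"
    and t: "t > 0" and c: "c \<ge> 0"
    and bad: "\<And>\<eta>. l2 \<eta> \<Longrightarrow> diam_le (supp \<eta>) Sp \<Longrightarrow> l2norm (op_apply T \<eta>) \<le> c * l2norm \<eta>"
  shows "\<exists>K. K \<in> CR (2*R0+1) \<and> positive_op K \<and> opnorm K = 1 \<and>
     (\<forall>\<xi>. l2 \<xi> \<longrightarrow> op_apply (proj B) (op_apply K (op_apply (proj B) \<xi>)) = op_apply K \<xi>) \<and>
     (\<forall>\<xi>. l2 \<xi> \<and> l2norm \<xi> = 1 \<and> diam_le (supp \<xi>) Sp \<longrightarrow> l2norm (op_apply K \<xi>) \<le> c / t)"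
proof -
  define A where "A = (\<lambda>x y. if x \<in> B \<and> y \<in> B then T x y else 0)"
  have fmA: "fm B A" unfolding fm_def A_def using B by simp
  have Aapp: "op_apply A \<xi> = rs B (op_apply T (rs B \<xi>))" for \<xi>
  proof -
    have e: "op_apply T (rs B \<xi>) = (\<lambda>x. \<Sum>y\<in>B. T x y * rs B \<xi> y)"
      by (rule opfin_supp[OF B]) (rule supp_rs')
    show ?thesis unfolding fm_apply(1)[OF fmA]
    proof (intro ext)
      fix x
      show "(\<Sum>y\<in>B. A x y * \<xi> y) = rs B (op_apply T (rs B \<xi>)) x"
      proof (cases "x \<in> B")
        case True
        then show ?thesis using e[THEN fun_cong, of x] by (simp add: rs_def A_def cong: sum.cong)
      next
        case False
        then show ?thesis unfolding rs_def A_def by simp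
      qed
    qed
  qed
  have Al2: "l2norm (op_apply A \<xi>) \<le> l2norm (op_apply T (rs B \<xi>))" if "l2 \<xi>" for \<xi>
    unfolding Aapp by (rule l2norm_rs_le[OF l2T[OF l2_rs[OF B]] B])
  have Abd: "l2norm (op_apply A \<xi>) \<le> l2norm \<xi>" if "l2 \<xi>" for \<xi>
    using Al2[OF that] contr[OF l2_rs[OF B], of \<xi>] l2norm_rs_le[OF that B] by linarith
  have Abad: "l2norm (op_apply A \<xi>) \<le> c * l2norm \<xi>" if "l2 \<xi>" "diam_le (supp \<xi>) Sp" for \<xi>
  proof -
    have "diam_le (supp (rs B \<xi>)) Sp"
      by (rule diam_le_subset[OF that(2) supp_rs2])
    then have "l2norm (op_apply T (rs B \<xi>)) \<le> c * l2norm (rs B \<xi>)"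
      using bad l2_rs[OF B] by blast
    also have "\<dots> \<le> c * l2norm \<xi>" using mult_left_mono[OF l2norm_rs_le[OF that(1) B] c] .
    finally show ?thesis using Al2[OF that(1)] by linarith
  qed
  have A0: "op_apply A \<xi>0 = op_apply T \<xi>0"
    unfolding Aapp rs_supp[OF s0] rs_supp[OF s1] ..
  define Ad where "Ad = (\<lambda>x y. cnj (A y x))"
  have fmAd: "fm B Ad" using fmA unfolding fm_def Ad_def by auto
  define C where "C = (\<lambda>x y. \<Sum>z\<in>B. cnj (A z x) * A z y)"
  have fmC: "fm B C" unfolding fm_def
  proof (intro conjI[OF B] allI impI)
    fix x y assume "C x y \<noteq> 0"
    then obtain z where "cnj (A z x) * A z y \<noteq> 0" unfolding C_def by (meson sum.neutral)
    then show "x \<in> B \<and> y \<in> B" using fmA unfolding fm_def by auto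
  qed
  have Capp: "op_apply C \<xi> = op_apply Ad (op_apply A \<xi>)" for \<xi>
  proof (rule ext)
    fix x
    have "op_apply Ad (op_apply A \<xi>) x = (\<Sum>z\<in>B. Ad x z * op_apply A \<xi> z)"
      by (simp add: fm_apply(1)[OF fmAd])
    also have "\<dots> = (\<Sum>z\<in>B. cnj (A z x) * (\<Sum>y\<in>B. A z y * \<xi> y))"
      by (simp add: fm_apply(1)[OF fmA] Ad_def)
    also have "\<dots> = (\<Sum>z\<in>B. \<Sum>y\<in>B. cnj (A z x) * (A z y * \<xi> y))"
      by (simp add: sum_distrib_left)
    also have "\<dots> = (\<Sum>y\<in>B. \<Sum>z\<in>B. cnj (A z x) * (A z y * \<xi> y))" by (rule sum.swap)
    also have "\<dots> = (\<Sum>y\<in>B. C x y * \<xi> y)"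
      by (simp add: C_def sum_distrib_right mult.assoc)
    also have "\<dots> = op_apply C \<xi> x"
      by (simp add: fm_apply(1)[OF fmC])
    finally show "op_apply C \<xi> x = op_apply Ad (op_apply A \<xi>) x" by simp
  qed
  have Adbd: "l2norm (op_apply Ad \<eta>) \<le> l2norm \<eta>" if "l2 \<eta>" for \<eta>
  proof -
    define u where "u = op_apply Ad \<eta>"
    have su: "supp u \<subseteq> B" unfolding u_def by (rule fm_supp[OF fmAd])
    have u: "u x = (\<Sum>z\<in>B. cnj (A z x) * \<eta> z)" for x
      unfolding u_def fm_apply(1)[OF fmAd] by (simp add: Ad_def)
    have Au: "op_apply A u z = (\<Sum>x\<in>B. A z x * u x)" for z
      unfolding fm_apply(1)[OF fmA] ..
    have "complex_of_real (nsq B u) = (\<Sum>x\<in>B. u x * cnj (u x))"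
      by (simp only: nsq_def of_real_sum complex_norm_square)
    also have "\<dots> = (\<Sum>x\<in>B. \<Sum>z\<in>B. cnj (A z x) * \<eta> z * cnj (u x))"
      unfolding u by (simp add: sum_distrib_right)
    also have "\<dots> = (\<Sum>z\<in>B. \<Sum>x\<in>B. cnj (A z x) * \<eta> z * cnj (u x))"
      by (rule sum.swap)
    also have "\<dots> = cnj (\<Sum>z\<in>B. cnj (\<eta> z) * op_apply A u z)"
      unfolding Au by (simp add: sum_distrib_left mult_ac)
    finally have e: "complex_of_real (nsq B u) = cnj (\<Sum>z\<in>B. cnj (\<eta> z) * op_apply A u z)" .
    have nn: "0 \<le> nsq B u" unfolding nsq_def by (simp add: sum_nonneg)
    have "nsq B u = cmod (complex_of_real (nsq B u))"
      by (metis nn norm_of_real abs_of_nonneg)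
    also have "\<dots> = cmod (\<Sum>z\<in>B. cnj (\<eta> z) * op_apply A u z)" by (simp only: e complex_mod_cnj)
    also have "\<dots> \<le> l2norm \<eta> * l2norm (op_apply A u)"
      by (rule CS_fin[OF B fm_supp[OF fmA] that])
    also have "\<dots> \<le> l2norm \<eta> * l2norm u"
      by (rule mult_left_mono[OF Abd[OF l2_fin(1)[OF B su]] l2norm_nonneg])
    finally have "(l2norm u)\<^sup>2 \<le> l2norm \<eta> * l2norm u"
      using l2_fin(3)[OF B su] by simp
    then show ?thesis unfolding u_def[symmetric]
      using l2norm_nonneg[of u] l2norm_nonneg[of \<eta>]
      by (cases "l2norm u = 0") (auto simp: power2_eq_square)
  qed
  have Cbd: "l2norm (op_apply C \<xi>) \<le> l2norm (op_apply A \<xi>)" for \<xi>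
    unfolding Capp by (rule Adbd[OF fm_l2[OF fmA]])
  have Cinner: "l2inner \<xi> (op_apply C \<xi>) = complex_of_real ((l2norm (op_apply A \<xi>))\<^sup>2)" for \<xi>
  proof -
    define w where "w = op_apply A \<xi>"
    have w: "w z = (\<Sum>x\<in>B. A z x * \<xi> x)" for z unfolding w_def fm_apply(1)[OF fmA] ..
    have Cw: "op_apply C \<xi> x = (\<Sum>z\<in>B. cnj (A z x) * w z)" for x
      unfolding Capp w_def[symmetric] fm_apply(1)[OF fmAd] by (simp add: Ad_def)
    have "l2inner \<xi> (op_apply C \<xi>) = (\<Sum>x\<in>B. cnj (\<xi> x) * op_apply C \<xi> x)"
      by (rule l2inner_fin[OF B fm_supp[OF fmC]])
    also have "\<dots> = (\<Sum>x\<in>B. \<Sum>z\<in>B. cnj (\<xi> x) * (cnj (A z x) * w z))"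
      unfolding Cw by (simp add: sum_distrib_left)
    also have "\<dots> = (\<Sum>z\<in>B. \<Sum>x\<in>B. cnj (\<xi> x) * (cnj (A z x) * w z))"
      by (rule sum.swap)
    also have "\<dots> = (\<Sum>z\<in>B. cnj (w z) * w z)"
    proof (rule sum.cong[OF refl])
      fix z assume "z \<in> B"
      have cw: "cnj (w z) = (\<Sum>x\<in>B. cnj (A z x) * cnj (\<xi> x))" unfolding w by simp
      show "(\<Sum>x\<in>B. cnj (\<xi> x) * (cnj (A z x) * w z)) = cnj (w z) * w z"
        unfolding cw sum_distrib_right by (simp add: mult_ac)
    qed
    also have "\<dots> = (\<Sum>z\<in>B. complex_of_real ((cmod (w z))\<^sup>2))"
      by (intro sum.cong refl) (subst complex_norm_square, simp add: mult.commute)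
    also have "\<dots> = complex_of_real (nsq B w)" unfolding nsq_def by simp
    also have "\<dots> = complex_of_real ((l2norm w)\<^sup>2)"
      using l2_fin(3)[OF B fm_supp[OF fmA]] w_def by simp
    finally show ?thesis unfolding w_def .
  qed
  have bddC: "bounded_op C"
  proof (rule fm_bounded[OF fmC, of 1])
    fix \<xi> :: "'a \<Rightarrow> complex" assume "l2 \<xi>"
    then show "l2norm (op_apply C \<xi>) \<le> 1 * l2norm \<xi>" using Cbd[of \<xi>] Abd[of \<xi>] by simp
  qed
  define N where "N = opnorm C"
  have setC: "bdd_above {l2norm (op_apply C \<xi>) | \<xi>. l2 \<xi> \<and> l2norm \<xi> \<le> 1}"
    by (rule opnorm_bdd[OF bddC])
  define s where "s = l2norm \<xi>0"
  define \<xi>1 where "\<xi>1 = (\<lambda>x. \<xi>0 x / complex_of_real s)"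
  have l2x0: "l2 \<xi>0" using l2_fin(1)[OF B s0] .
  have x1a: "l2 \<xi>1" unfolding \<xi>1_def by (rule l2_scale[OF l2x0])
  have x1b: "l2norm \<xi>1 = 1" unfolding \<xi>1_def l2norm_scale s_def using pos by simp
  note x1 = x1a x1b
  have "t \<le> (l2norm (op_apply A \<xi>1))\<^sup>2"
  proof -
    have "l2norm (op_apply A \<xi>1) = l2norm (op_apply T \<xi>0) / s"
      unfolding \<xi>1_def op_apply_scale l2norm_scale A0 using pos s_def by simp
    then have "(l2norm (op_apply A \<xi>1))\<^sup>2 = (l2norm (op_apply T \<xi>0))\<^sup>2 / s\<^sup>2"
      by (simp add: power_divide)
    moreover have "t \<le> (l2norm (op_apply T \<xi>0))\<^sup>2 / s\<^sup>2"
      using big pos unfolding s_def by (simp add: pos_le_divide_eq)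
    ultimately show ?thesis by simp
  qed
  also have "\<dots> = cmod (l2inner \<xi>1 (op_apply C \<xi>1))" unfolding Cinner norm_of_real by simp
  also have "\<dots> \<le> l2norm \<xi>1 * l2norm (op_apply C \<xi>1)"
    unfolding l2inner_fin[OF B fm_supp[OF fmC]] by (rule CS_fin[OF B fm_supp[OF fmC] x1(1)])
  also have "\<dots> \<le> N" unfolding x1(2) N_def opnorm_def
    by (rule cSup_upper[OF _ setC]) (use x1 in auto)
  finally have tN: "t \<le> N" .
  have Npos: "N > 0" using tN t by linarith
  define K where "K = (\<lambda>x y. C x y / complex_of_real N)"
  have Kapp: "op_apply K \<xi> = (\<lambda>x. op_apply C \<xi> x / complex_of_real N)" for \<xi>
    unfolding K_def by (rule op_apply_mscale)
  have Knorm: "l2norm (op_apply K \<xi>) = l2norm (op_apply C \<xi>) / N" for \<xi>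
    unfolding Kapp l2norm_scale using Npos by simp
  have fmK: "fm B K" using fmC unfolding fm_def K_def by auto
  have bddK: "bounded_op K"
  proof (rule fm_bounded[OF fmK, of "1/N"])
    fix \<xi> :: "'a \<Rightarrow> complex" assume "l2 \<xi>"
    then have "l2norm (op_apply C \<xi>) \<le> l2norm \<xi>" using Cbd[of \<xi>] Abd[of \<xi>] by simp
    then show "l2norm (op_apply K \<xi>) \<le> 1 / N * l2norm \<xi>"
      unfolding Knorm using Npos by (simp add: divide_right_mono)
  qed
  have propA: "A x y \<noteq> 0 \<Longrightarrow> dist x y \<le> R0" for x y
    using hprop unfolding propagation_le_def A_def by (auto split: if_splits)
  have propK: "propagation_le K (2*R0+1)" unfolding propagation_le_def
  proof (intro allI impI)
    fix x y assume "K x y \<noteq> 0"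
    then have "C x y \<noteq> 0" unfolding K_def by auto
    then obtain z where "cnj (A z x) * A z y \<noteq> 0" unfolding C_def by (meson sum.neutral)
    then have "dist z x \<le> R0" "dist z y \<le> R0" using propA by auto
    then have "dist x y \<le> 2 * R0" using dist_triangle[of x y z] by (simp add: dist_commute)
    then show "dist x y \<le> 2*R0+1" by simp
  qed
  have posK: "positive_op K" unfolding positive_op_def
  proof (intro conjI bddK allI impI)
    fix \<xi> :: "'a \<Rightarrow> complex"
    have "l2inner \<xi> (op_apply K \<xi>) = l2inner \<xi> (op_apply C \<xi>) * (1 / complex_of_real N)"
      unfolding Kapp l2inner_def using infsum_cmult_left'[of "\<lambda>x. cnj (\<xi> x) * op_apply C \<xi> x" "1 / complex_of_real N" UNIV]
      by simp
    also have "\<dots> = complex_of_real ((l2norm (op_apply A \<xi>))\<^sup>2 / N)"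
      unfolding Cinner by simp
    finally have e: "l2inner \<xi> (op_apply K \<xi>) = complex_of_real ((l2norm (op_apply A \<xi>))\<^sup>2 / N)" .
    show "Im (l2inner \<xi> (op_apply K \<xi>)) = 0" unfolding e by simp
    show "0 \<le> Re (l2inner \<xi> (op_apply K \<xi>))" unfolding e using Npos by simp
  qed
  have normK: "opnorm K = 1" unfolding opnorm_def
  proof (rule cSup_eq_non_empty)
    show "{l2norm (op_apply K \<xi>) |\<xi>. l2 \<xi> \<and> l2norm \<xi> \<le> 1} \<noteq> {}" using l2_zero[where 'a='a] by (auto intro!: exI[of _ "\<lambda>x::'a. 0::complex"])
    fix x assume "x \<in> {l2norm (op_apply K \<xi>) |\<xi>. l2 \<xi> \<and> l2norm \<xi> \<le> 1}"
    then obtain \<xi> where xi: "l2 \<xi>" "l2norm \<xi> \<le> 1" "x = l2norm (op_apply C \<xi>) / N"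
      unfolding Knorm by auto
    have "l2norm (op_apply C \<xi>) \<le> N" unfolding N_def opnorm_def
      by (rule cSup_upper[OF _ setC]) (use xi in auto)
    then show "x \<le> 1" using xi Npos by simp
  next
    fix y assume ub: "\<And>x. x \<in> {l2norm (op_apply K \<xi>) |\<xi>. l2 \<xi> \<and> l2norm \<xi> \<le> 1} \<Longrightarrow> x \<le> y"
    have NS: "N = Sup {l2norm (op_apply C \<xi>) |\<xi>. l2 \<xi> \<and> l2norm \<xi> \<le> 1}"
      unfolding N_def opnorm_def ..
    have "Sup {l2norm (op_apply C \<xi>) |\<xi>. l2 \<xi> \<and> l2norm \<xi> \<le> 1} \<le> y * N"
    proof (rule cSup_least)
      show "{l2norm (op_apply C \<xi>) |\<xi>. l2 \<xi> \<and> l2norm \<xi> \<le> 1} \<noteq> {}" using l2_zero[where 'a='a] by (auto intro!: exI[of _ "\<lambda>x::'a. 0::complex"])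
      fix x assume "x \<in> {l2norm (op_apply C \<xi>) |\<xi>. l2 \<xi> \<and> l2norm \<xi> \<le> 1}"
      then obtain \<xi> where xi: "l2 \<xi>" "l2norm \<xi> \<le> 1" "x = l2norm (op_apply C \<xi>)" by auto
      then have "x / N \<le> y" using ub[of "x / N"] unfolding Knorm by auto
      then show "x \<le> y * N" using Npos by (simp add: divide_le_eq)
    qed
    then have "N \<le> y * N" using NS by simp
    then show "1 \<le> y" using Npos by simp
  qed
  have projK: "op_apply (proj B) (op_apply K (op_apply (proj B) \<xi>)) = op_apply K \<xi>" for \<xi>
    unfolding proj_apply fm_rs[OF fmK] rs_supp[OF fm_supp[OF fmK]] ..
  have badK: "l2norm (op_apply K \<xi>) \<le> c / t"
    if "l2 \<xi>" "l2norm \<xi> = 1" "diam_le (supp \<xi>) Sp" for \<xi>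
  proof -
    have "l2norm (op_apply C \<xi>) \<le> c" using Cbd[of \<xi>] Abad[OF that(1,3)] that(2) by simp
    then have "l2norm (op_apply K \<xi>) \<le> c / N" unfolding Knorm using Npos by (simp add: divide_right_mono)
    also have "\<dots> \<le> c / t" using tN t c by (simp add: frac_le)
    finally show ?thesis .
  qed
  show ?thesis
    by (rule exI[of _ K]) (use bddK propK posK normK projK badK in \<open>auto simp: CR_def\<close>)
qed

end


lemma nsq_nonneg: "0 \<le> nsq A v"
  unfolding nsq_def by (simp add: sum_nonneg)

lemma nsq_mono_set: "finite B \<Longrightarrow> A \<subseteq> B \<Longrightarrow> nsq A v \<le> nsq B v"
  unfolding nsq_def by (rule sum_mono2) auto

lemma nsq_diff: "finite A \<Longrightarrow> B \<subseteq> A \<Longrightarrow> nsq (A - B) v = nsq A v - nsq B v"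
  unfolding nsq_def by (rule sum_diff)

context sett begin

definition Nb :: "'a set \<Rightarrow> 'a set" where "Nb G = {x. \<exists>y\<in>G. dist x y \<le> R0}"

lemma finite_Nb:
  assumes "finite G" shows "finite (Nb G)"
proof -
  have fc: "finite (cball y (R0+1))" for y :: 'a
  proof -
    have "R0 + 1 > 0" using R0 by simp
    then obtain N :: nat where "\<forall>x::'a. finite (cball x (R0+1)) \<and> card (cball x (R0+1)) \<le> N"
      using bg unfolding bounded_geometry_def by blast
    then show ?thesis by blast
  qed
  have "Nb G \<subseteq> (\<Union>y\<in>G. cball y (R0+1))"
    unfolding Nb_def cball_def by (auto simp add: dist_commute)
  moreover have "finite (\<Union>y\<in>G. cball y (R0+1))" using assms fc by blast
  ultimately show ?thesis by (rule finite_subset)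
qed

lemma G_sub_Nb: "G \<subseteq> Nb G"
proof
  fix x assume "x \<in> G"
  moreover have "dist x x \<le> R0" using R0 by simp
  ultimately show "x \<in> Nb G" unfolding Nb_def by blast
qed

lemma Tprop: "T x y \<noteq> 0 \<Longrightarrow> dist x y \<le> R0"
  using hprop unfolding propagation_le_def by blast

lemma supp_T:
  assumes "finite G" "supp \<xi> \<subseteq> G"
  shows "supp (op_apply T \<xi>) \<subseteq> Nb G"
proof
  fix x assume "x \<in> supp (op_apply T \<xi>)"
  then have "(\<Sum>y\<in>G. T x y * \<xi> y) \<noteq> 0" using opfin_supp[OF assms, of T] by (simp add: supp_def)
  then obtain y where "y \<in> G" "T x y * \<xi> y \<noteq> 0" by (meson sum.neutral)
  then show "x \<in> Nb G" unfolding Nb_def using Tprop[of x y] by auto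
qed

lemma Tapp_loc:
  assumes "finite G" "supp \<xi> \<subseteq> G" "\<And>y. T x y \<noteq> 0 \<Longrightarrow> y \<in> U"
  shows "op_apply T (rs W \<xi>) x = op_apply T (rs (W \<inter> U) \<xi>) x"
proof -
  have s1: "supp (rs W \<xi>) \<subseteq> G" using supp_rs2 assms(2) by (rule order_trans)
  have s2: "supp (rs (W \<inter> U) \<xi>) \<subseteq> G" using supp_rs2 assms(2) by (rule order_trans)
  show ?thesis unfolding opfin_supp[OF assms(1) s1] opfin_supp[OF assms(1) s2]
  proof (rule sum.cong[OF refl])
    fix y assume "y \<in> G"
    show "T x y * rs W \<xi> y = T x y * rs (W \<inter> U) \<xi> y"
      using assms(3)[of y] unfolding rs_def by (cases "T x y = 0") auto
  qed
qed

end


context sett begin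

lemma ring:
  fixes F G0 :: "'a set" and D w t c Sp :: real and M :: nat and \<zeta> :: "'a \<Rightarrow> complex"
  assumes F: "finite F" and D: "\<And>f g. f \<in> F \<Longrightarrow> g \<in> F \<Longrightarrow> dist f g \<le> D"
    and w: "w = R0 + 1" and M: "M > 0"
    and Sp: "D + 2 * real (4*M+2) * w \<le> Sp"
    and bad: "\<And>\<eta>. l2 \<eta> \<Longrightarrow> diam_le (supp \<eta>) Sp \<Longrightarrow> l2norm (op_apply T \<eta>) \<le> c * l2norm \<eta>"
    and c: "c \<ge> 0" "c\<^sup>2 < t" and G0: "finite G0" "supp \<zeta> \<subseteq> G0" and z1: "l2norm \<zeta> \<le> 1"
    and big: "t + 2 / M \<le> (l2norm (op_apply T \<zeta>))\<^sup>2"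
  shows "\<exists>B \<xi>0. finite B \<and> B \<inter> F = {} \<and> supp \<xi>0 \<subseteq> B \<and> supp (op_apply T \<xi>0) \<subseteq> B \<and>
      l2norm \<xi>0 > 0 \<and> t * (l2norm \<xi>0)\<^sup>2 \<le> (l2norm (op_apply T \<xi>0))\<^sup>2"
proof -
  have wpos: "w > 0" using w R0 by simp
  define I where "I n = {x. \<exists>f\<in>F. dist x f \<le> real n * w}" for n :: nat
  have I_mono: "I m \<subseteq> I n" if "m \<le> n" for m n
  proof
    fix x assume "x \<in> I m"
    then obtain f where "f \<in> F" "dist x f \<le> real m * w" unfolding I_def by blast
    moreover have "real m * w \<le> real n * w" using that wpos by simp
    ultimately show "x \<in> I n" unfolding I_def by force
  qed
  have F_I: "F \<subseteq> I n" for n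
  proof
    fix f assume "f \<in> F"
    moreover have "dist f f \<le> real n * w" using wpos by simp
    ultimately show "f \<in> I n" unfolding I_def by blast
  qed
  have I_step: "y \<in> I (Suc n)" if xI: "x \<in> I n" and dxy: "dist x y \<le> R0" for x y n
  proof -
    obtain f where f: "f \<in> F" "dist x f \<le> real n * w" using xI unfolding I_def by blast
    have "dist y f \<le> dist y x + dist x f" by (rule dist_triangle)
    also have "\<dots> \<le> real (Suc n) * w" using f(2) dxy w by (simp add: dist_commute algebra_simps)
    finally show ?thesis using f(1) unfolding I_def by blast
  qed
  have I_diam: "diam_le (I n) (D + 2 * real n * w)" for n
    unfolding diam_le_def
  proof (intro ballI)
    fix x y assume "x \<in> I n" "y \<in> I n"
    then obtain f g where "f \<in> F" "dist x f \<le> real n * w" "g \<in> F" "dist y g \<le> real n * w"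
      unfolding I_def by blast
    moreover have "dist x y \<le> dist x f + dist f g + dist g y"
    proof -
      have "dist x y \<le> dist x f + dist f y" by (rule dist_triangle)
      moreover have "dist f y \<le> dist f g + dist g y" by (rule dist_triangle)
      ultimately show ?thesis by linarith
    qed
    moreover have "dist f g \<le> D" using D \<open>f \<in> F\<close> \<open>g \<in> F\<close> by blast
    ultimately show "dist x y \<le> D + 2 * real n * w" by (simp add: dist_commute)
  qed
  define \<mu> where "\<mu> n = nsq (G0 \<inter> I n) \<zeta>" for n
  have nz: "nsq G0 \<zeta> = (l2norm \<zeta>)\<^sup>2" using l2_fin(3)[OF G0] by simp
  have nz1: "nsq G0 \<zeta> \<le> 1"
    unfolding nz using z1 l2norm_nonneg[of \<zeta>] by (simp add: power_le_one)
  have mu_le: "\<mu> n \<le> 1" for n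
    unfolding \<mu>_def using nsq_mono_set[OF G0(1), of "G0 \<inter> I n" \<zeta>] nz1 by simp
  have "\<exists>k<M. \<mu> (4*k+4) - \<mu> (4*k) \<le> 1 / real M"
  proof (rule ccontr)
    assume "\<not> ?thesis"
    then have h: "1 / real M < \<mu> (4*k+4) - \<mu> (4*k)" if "k < M" for k using that by force
    have "1 = (\<Sum>k<M. 1 / real M)" using M by simp
    also have "\<dots> < (\<Sum>k<M. \<mu> (4 * Suc k) - \<mu> (4*k))"
    proof (rule sum_strict_mono)
      show "{..<M} \<noteq> {}" using M by auto
      fix x assume "x \<in> {..<M}"
      then show "1 / real M < \<mu> (4 * Suc x) - \<mu> (4*x)" using h[of x] by (simp add: add.commute[of "4*x"])
    qed simp
    also have "\<dots> = \<mu> (4*M) - \<mu> (4*0)"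
      using sum_lessThan_telescope[of "\<lambda>k. \<mu> (4*k)" M] by simp
    also have "\<dots> \<le> 1" using mu_le[of "4*M"] nsq_nonneg[of "G0 \<inter> I 0" \<zeta>] unfolding \<mu>_def by simp
    finally show False by simp
  qed
  then obtain k where k: "k < M" "\<mu> (4*k+4) - \<mu> (4*k) \<le> 1 / real M" by blast
  define j where "j = 4*k+2"
  have window: "nsq (G0 \<inter> W) \<zeta> \<le> 1 / real M" if "W \<subseteq> I (4*k+4) - I (4*k)" for W
  proof -
    have "nsq (G0 \<inter> W) \<zeta> \<le> nsq (G0 \<inter> I (4*k+4) - G0 \<inter> I (4*k)) \<zeta>"
      by (rule nsq_mono_set) (use G0 that in auto)
    also have "\<dots> = \<mu> (4*k+4) - \<mu> (4*k)" unfolding \<mu>_def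
      by (rule nsq_diff) (use G0 I_mono[of "4*k" "4*k+4"] in auto)
    finally show ?thesis using k(2) by simp
  qed
  define \<zeta>i where "\<zeta>i = rs (I j) \<zeta>"
  define \<zeta>o where "\<zeta>o = rs (- I j) \<zeta>"
  have si: "supp \<zeta>i \<subseteq> G0" unfolding \<zeta>i_def using supp_rs2 G0(2) by (rule order_trans)
  have so: "supp \<zeta>o \<subseteq> G0" unfolding \<zeta>o_def using supp_rs2 G0(2) by (rule order_trans)
  define a where "a = op_apply T \<zeta>i"
  define b where "b = op_apply T \<zeta>o"
  define V where "V = Nb G0"
  have V: "finite V" unfolding V_def by (rule finite_Nb[OF G0(1)])
  have sa: "supp a \<subseteq> V" unfolding a_def V_def by (rule supp_T[OF G0(1) si])
  have sb: "supp b \<subseteq> V" unfolding b_def V_def by (rule supp_T[OF G0(1) so])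
  have sv: "supp (op_apply T \<zeta>) \<subseteq> V" unfolding V_def by (rule supp_T[OF G0])
  have Tsum: "op_apply T \<zeta> x = a x + b x" for x
  proof -
    have "op_apply T \<zeta> x = (\<Sum>y\<in>G0. T x y * \<zeta>i y + T x y * \<zeta>o y)"
      unfolding opfin_supp[OF G0] by (intro sum.cong refl) (simp add: \<zeta>i_def \<zeta>o_def rs_def)
    also have "\<dots> = a x + b x"
      unfolding a_def b_def opfin_supp[OF G0(1) si] opfin_supp[OF G0(1) so] by (rule sum.distrib)
    finally show ?thesis .
  qed
  have az: "a x = 0" if "x \<notin> I (Suc j)" for x
  proof (rule ccontr)
    assume "a x \<noteq> 0"
    then have "(\<Sum>y\<in>G0. T x y * \<zeta>i y) \<noteq> 0" unfolding a_def opfin_supp[OF G0(1) si] by simp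
    then obtain y where "T x y * \<zeta>i y \<noteq> 0" by (meson sum.neutral)
    then have "T x y \<noteq> 0" "y \<in> I j" unfolding \<zeta>i_def rs_def by (auto split: if_splits)
    then have "x \<in> I (Suc j)" using I_step[of y j x] Tprop[of x y] by (simp add: dist_commute)
    then show False using that by simp
  qed
  have bz: "b x = 0" if "x \<in> I (4*k+1)" for x
  proof (rule ccontr)
    assume "b x \<noteq> 0"
    then have "(\<Sum>y\<in>G0. T x y * \<zeta>o y) \<noteq> 0" unfolding b_def opfin_supp[OF G0(1) so] by simp
    then obtain y where "T x y * \<zeta>o y \<noteq> 0" by (meson sum.neutral)
    then have "T x y \<noteq> 0" "y \<notin> I j" unfolding \<zeta>o_def rs_def by (auto split: if_splits)
    moreover have "y \<in> I (Suc (4*k+1))" using I_step[OF that Tprop] \<open>T x y \<noteq> 0\<close> by simp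
    ultimately show False unfolding j_def by simp
  qed
  define Z where "Z = I (Suc j) - I (4*k+1)"
  have pw: "(cmod (a x + b x))\<^sup>2 \<le> (cmod (a x))\<^sup>2 + (cmod (b x))\<^sup>2 +
      ((if x \<in> Z then (cmod (a x))\<^sup>2 else 0) + (if x \<in> Z then (cmod (b x))\<^sup>2 else 0))" for x
  proof (cases "x \<in> Z")
    case True
    have "cmod (a x + b x) \<le> cmod (a x) + cmod (b x)" by (rule norm_triangle_ineq)
    then have "(cmod (a x + b x))\<^sup>2 \<le> (cmod (a x) + cmod (b x))\<^sup>2"
      by (rule power_mono) simp
    also have "\<dots> \<le> 2 * (cmod (a x))\<^sup>2 + 2 * (cmod (b x))\<^sup>2"
    proof -
      have "0 \<le> (cmod (a x) - cmod (b x))\<^sup>2" by simp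
      then show ?thesis unfolding power2_sum power2_diff by linarith
    qed
    finally show ?thesis using True by simp
  next
    case False
    then have "a x = 0 \<or> b x = 0" using az bz unfolding Z_def by blast
    then show ?thesis using False by auto
  qed
  have "nsq V (op_apply T \<zeta>) \<le> (\<Sum>x\<in>V. (cmod (a x))\<^sup>2 + (cmod (b x))\<^sup>2 +
      ((if x \<in> Z then (cmod (a x))\<^sup>2 else 0) + (if x \<in> Z then (cmod (b x))\<^sup>2 else 0)))"
    unfolding nsq_def Tsum by (rule sum_mono) (rule pw)
  also have "\<dots> = nsq V a + nsq V b + (nsq (V \<inter> Z) a + nsq (V \<inter> Z) b)"
    unfolding nsq_def sum.distrib sum.inter_restrict[OF V] by simp
  finally have split: "nsq V (op_apply T \<zeta>) \<le> nsq V a + nsq V b + (nsq (V \<inter> Z) a + nsq (V \<inter> Z) b)" .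
  have small: "nsq (V \<inter> Z) v \<le> 1 / real M"
    if vx: "\<And>x. x \<in> Z \<Longrightarrow> v x = op_apply T (rs W \<zeta>) x" and W: "W \<subseteq> I (4*k+4) - I (4*k)" for v W
  proof -
    have sW: "supp (rs W \<zeta>) \<subseteq> G0" using supp_rs2 G0(2) by (rule order_trans)
    have "nsq (V \<inter> Z) v = nsq (V \<inter> Z) (op_apply T (rs W \<zeta>))"
      unfolding nsq_def by (intro sum.cong refl) (simp add: vx)
    also have "\<dots> \<le> (l2norm (op_apply T (rs W \<zeta>)))\<^sup>2"
      by (rule nsq_le_l2norm) (use l2T[OF l2_fin(1)[OF G0(1) sW]] V in auto)
    also have "\<dots> \<le> (l2norm (rs W \<zeta>))\<^sup>2"
      by (rule power_mono[OF contr[OF l2_fin(1)[OF G0(1) sW]] l2norm_nonneg])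
    also have "\<dots> = nsq (G0 \<inter> W) \<zeta>" using l2_fin(3)[OF G0(1) sW] nsq_rs[OF G0(1)] by simp
    also have "\<dots> \<le> 1 / real M" by (rule window[OF W])
    finally show ?thesis .
  qed
  have smalla: "nsq (V \<inter> Z) a \<le> 1 / real M"
  proof (rule small[where W="I j \<inter> - I (4*k)"])
    fix x assume "x \<in> Z"
    then have "x \<notin> I (Suc (4*k))" unfolding Z_def by simp
    then have U: "y \<in> - I (4*k)" if "T x y \<noteq> 0" for y
      using I_step[of y "4*k" x] Tprop[OF that] by (auto simp: dist_commute)
    show "a x = op_apply T (rs (I j \<inter> - I (4*k)) \<zeta>) x"
      unfolding a_def \<zeta>i_def by (rule Tapp_loc[OF G0 U])
  next
    show "I j \<inter> - I (4 * k) \<subseteq> I (4 * k + 4) - I (4 * k)" using I_mono[of j "4*k+4"] unfolding j_def by auto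
  qed
  have smallb: "nsq (V \<inter> Z) b \<le> 1 / real M"
  proof (rule small[where W="- I j \<inter> I (4*k+4)"])
    fix x assume "x \<in> Z"
    then have "x \<in> I (Suc j)" unfolding Z_def by simp
    have e: "Suc (Suc j) = 4*k+4" unfolding j_def by simp
    have U: "y \<in> I (4*k+4)" if "T x y \<noteq> 0" for y
      using I_step[OF \<open>x \<in> I (Suc j)\<close> Tprop[OF that]] unfolding e .
    show "b x = op_apply T (rs (- I j \<inter> I (4*k+4)) \<zeta>) x"
      unfolding b_def \<zeta>o_def by (rule Tapp_loc[OF G0 U])
  next
    show "- I j \<inter> I (4 * k + 4) \<subseteq> I (4 * k + 4) - I (4 * k)" using I_mono[of "4*k" j] unfolding j_def by auto
  qed
  define \<alpha> where "\<alpha> = nsq G0 \<zeta>i"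
  define \<beta> where "\<beta> = nsq G0 \<zeta>o"
  have ab: "\<alpha> + \<beta> \<le> 1"
  proof -
    have "\<alpha> + \<beta> = nsq G0 \<zeta>" unfolding \<alpha>_def \<beta>_def nsq_def sum.distrib[symmetric]
      by (intro sum.cong refl) (simp add: \<zeta>i_def \<zeta>o_def rs_def)
    then show ?thesis using nz1 by simp
  qed
  have a0: "0 \<le> \<alpha>" "0 \<le> \<beta>" unfolding \<alpha>_def \<beta>_def by (rule nsq_nonneg)+
  have jle: "real j \<le> real (4*M+2)" using k(1) unfolding j_def by simp
  have dI: "diam_le (supp \<zeta>i) Sp"
  proof (rule diam_le_mono[OF diam_le_subset[OF I_diam[of j]]])
    show "supp \<zeta>i \<subseteq> I j" unfolding \<zeta>i_def supp_def rs_def by auto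
    show "D + 2 * real j * w \<le> Sp" using Sp jle wpos by (smt (verit) mult_right_mono)
  qed
  have la: "l2norm a \<le> c * l2norm \<zeta>i" unfolding a_def by (rule bad[OF l2_fin(1)[OF G0(1) si] dI])
  have na: "nsq V a \<le> c\<^sup>2 * \<alpha>"
  proof -
    have "nsq V a = (l2norm a)\<^sup>2" using l2_fin(3)[OF V sa] by simp
    also have "\<dots> \<le> (c * l2norm \<zeta>i)\<^sup>2" by (rule power_mono[OF la l2norm_nonneg])
    also have "\<dots> = c\<^sup>2 * \<alpha>" unfolding \<alpha>_def using l2_fin(3)[OF G0(1) si] by (simp add: power_mult_distrib)
    finally show ?thesis .
  qed
  have nb: "nsq V b \<le> \<beta>"
  proof -
    have "nsq V b = (l2norm b)\<^sup>2" using l2_fin(3)[OF V sb] by simp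
    also have "\<dots> \<le> (l2norm \<zeta>o)\<^sup>2" unfolding b_def by (rule power_mono[OF contr[OF l2_fin(1)[OF G0(1) so]] l2norm_nonneg])
    also have "\<dots> = \<beta>" unfolding \<beta>_def using l2_fin(3)[OF G0(1) so] by simp
    finally show ?thesis .
  qed
  have nv: "nsq V (op_apply T \<zeta>) = (l2norm (op_apply T \<zeta>))\<^sup>2" using l2_fin(3)[OF V sv] by simp
  have key: "t - c\<^sup>2 * \<alpha> \<le> nsq V b"
    using split smalla smallb na big nv by (simp add: field_simps)
  have tpos: "t > 0" using c(2) by (smt (verit) zero_le_power2)
  have c2a: "c\<^sup>2 * \<alpha> \<le> c\<^sup>2" using ab a0 by (simp add: mult_left_le)
  have bpos: "nsq V b > 0" using key c2a c(2) by linarith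
  have tb: "t * \<beta> \<le> nsq V b"
  proof -
    have "t * \<beta> \<le> t * (1 - \<alpha>)" using ab tpos by simp
    also have "\<dots> \<le> t - c\<^sup>2 * \<alpha>"
    proof -
      have "c\<^sup>2 * \<alpha> \<le> t * \<alpha>" using c(2) a0(1) by (intro mult_right_mono) auto
      then show ?thesis by (simp add: algebra_simps)
    qed
    finally show ?thesis using key by simp
  qed
  define B where "B = V \<inter> - I (4*k+1)"
  show ?thesis
  proof (intro exI conjI)
    show "finite B" unfolding B_def using V by simp
    show "B \<inter> F = {}" unfolding B_def using F_I[of "4*k+1"] by blast
    show "supp \<zeta>o \<subseteq> B"
    proof
      fix x assume x: "x \<in> supp \<zeta>o"
      then have "x \<in> V" using so G_sub_Nb[of G0] unfolding V_def by blast
      moreover have "x \<notin> I j" using x unfolding \<zeta>o_def supp_def rs_def by auto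
      then have "x \<notin> I (4*k+1)" using I_mono[of "4*k+1" j] unfolding j_def by auto
      ultimately show "x \<in> B" unfolding B_def by simp
    qed
    show "supp (op_apply T \<zeta>o) \<subseteq> B"
    proof
      fix x assume x: "x \<in> supp (op_apply T \<zeta>o)"
      then have "x \<in> V" using sb unfolding b_def by blast
      moreover have "x \<notin> I (4*k+1)" using x bz unfolding b_def supp_def by auto
      ultimately show "x \<in> B" unfolding B_def by simp
    qed
    have lb: "(l2norm (op_apply T \<zeta>o))\<^sup>2 = nsq V b" using l2_fin(3)[OF V sb] unfolding b_def by simp
    have lo: "(l2norm \<zeta>o)\<^sup>2 = \<beta>" unfolding \<beta>_def using l2_fin(3)[OF G0(1) so] by simp
    show "t * (l2norm \<zeta>o)\<^sup>2 \<le> (l2norm (op_apply T \<zeta>o))\<^sup>2" unfolding lb lo by (rule tb)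
    have "\<beta> > 0" using bpos nb by linarith
    then show "l2norm \<zeta>o > 0" using lo l2norm_nonneg[of \<zeta>o]
      by (metis less_eq_real_def power2_eq_square mult_zero_left)
  qed
qed

end


context sett begin

lemma approx:
  assumes r: "r < 1"
  shows "\<exists>G0 \<zeta>. finite G0 \<and> supp \<zeta> \<subseteq> G0 \<and> l2norm \<zeta> \<le> 1 \<and> r \<le> (l2norm (op_apply T \<zeta>))\<^sup>2"
proof -
  define r' where "r' = max r 0"
  have r'1: "sqrt r' < 1" using r unfolding r'_def by (simp add: max_def)
  let ?X = "{l2norm (op_apply T \<xi>) |\<xi>. l2 \<xi> \<and> l2norm \<xi> \<le> 1}"
  have ne: "?X \<noteq> {}" using l2_zero[where 'a='a] by (auto intro!: exI[of _ "\<lambda>x::'a. 0::complex"])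
  have "sqrt r' < Sup ?X" using r'1 nrm unfolding opnorm_def by simp
  then obtain \<xi> where xi: "l2 \<xi>" "l2norm \<xi> \<le> 1" "sqrt r' < l2norm (op_apply T \<xi>)"
    using less_cSup_iff[OF ne opnorm_bdd[OF bdd]] by auto
  define v where "v = op_apply T \<xi>"
  have lv: "l2 v" unfolding v_def by (rule l2T[OF xi(1)])
  define s where "s = (\<Sum>\<^sub>\<infinity>x. (cmod (v x))\<^sup>2)"
  have s0: "0 \<le> s" unfolding s_def by (simp add: infsum_nonneg)
  have sv: "l2norm v = sqrt s" unfolding l2norm_def s_def ..
  have "r' < s"
  proof -
    have "sqrt r' < sqrt s" using xi(3) sv v_def by simp
    then show ?thesis by (simp add: real_sqrt_less_iff)
  qed
  then have e: "(s - r') / 2 > 0" by simp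
  obtain K where K: "finite K" "dist (\<Sum>x\<in>K. (cmod (v x))\<^sup>2) s \<le> (s - r') / 2"
    using infsum_finite_approximation[OF lv[unfolded l2_def] e] unfolding s_def by blast
  have Kbig: "r' < nsq K v"
  proof -
    have "- (nsq K v - s) \<le> (s - r') / 2"
      using abs_le_D2[OF K(2)[unfolded dist_real_def]] unfolding nsq_def .
    then show ?thesis using \<open>r' < s\<close> by argo
  qed
  define G0 where "G0 = Nb K"
  define \<zeta> where "\<zeta> = rs G0 \<xi>"
  have G0: "finite G0" unfolding G0_def by (rule finite_Nb[OF K(1)])
  have sz: "supp \<zeta> \<subseteq> G0" unfolding \<zeta>_def by (rule supp_rs')
  have lz: "l2norm \<zeta> \<le> 1" unfolding \<zeta>_def using l2norm_rs_le[OF xi(1) G0] xi(2) by linarith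
  have eq: "op_apply T \<zeta> x = v x" if "x \<in> K" for x
    unfolding v_def op_apply_def
  proof (rule arg_cong[where f="\<lambda>f. infsum f UNIV"], rule ext)
    fix y
    show "T x y * \<zeta> y = T x y * \<xi> y"
    proof (cases "T x y = 0")
      case False
      then have "dist x y \<le> R0" by (rule Tprop)
      then have "y \<in> G0" unfolding G0_def Nb_def using that by (auto simp: dist_commute)
      then show ?thesis unfolding \<zeta>_def rs_def by simp
    qed simp
  qed
  have "nsq K v = nsq K (op_apply T \<zeta>)" unfolding nsq_def by (intro sum.cong refl) (simp add: eq)
  also have "\<dots> \<le> (l2norm (op_apply T \<zeta>))\<^sup>2"
    by (rule nsq_le_l2norm[OF l2T[OF l2_fin(1)[OF G0 sz]] K(1)])
  finally have "r \<le> (l2norm (op_apply T \<zeta>))\<^sup>2" using Kbig unfolding r'_def by linarith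
  then show ?thesis using G0 sz lz by blast
qed

end

lemma bad_scale:
  assumes "bounded_op T" and lt: "\<And>\<xi>. l2 \<xi> \<and> l2norm \<xi> = 1 \<and> diam_le (supp \<xi>) S \<longrightarrow> l2norm (op_apply T \<xi>) < c"
    and "l2 \<eta>" "diam_le (supp \<eta>) S"
  shows "l2norm (op_apply T \<eta>) \<le> c * l2norm \<eta>"
proof (cases "l2norm \<eta> = 0")
  case True
  then show ?thesis using op_le[OF assms(1,3)] l2norm_nonneg[of "op_apply T \<eta>"] by simp
next
  case False
  define s where "s = l2norm \<eta>"
  have s: "s > 0" using False l2norm_nonneg[of \<eta>] s_def by simp
  define \<xi> where "\<xi> = (\<lambda>x. \<eta> x / complex_of_real s)"
  have "l2 \<xi>" unfolding \<xi>_def by (rule l2_scale[OF assms(3)])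
  moreover have "l2norm \<xi> = 1" unfolding \<xi>_def l2norm_scale using s s_def by simp
  moreover have "supp \<xi> = supp \<eta>" unfolding \<xi>_def supp_def using s by auto
  ultimately have "l2norm (op_apply T \<xi>) < c" using lt assms(4) by auto
  moreover have "l2norm (op_apply T \<xi>) = l2norm (op_apply T \<eta>) / s"
    unfolding \<xi>_def op_apply_scale l2norm_scale using s by simp
  ultimately show ?thesis using s unfolding s_def by (simp add: divide_less_eq mult.commute)
qed



lemma main_step:
  fixes R0 c S :: real and F :: "'a::metric_space set"
  assumes bg: "bounded_geometry TYPE('a)" and R0: "R0 \<ge> 0" and c: "0 < c" "c < 1"
    and H: "\<And>S. S > 0 \<Longrightarrow> \<exists>T::'a \<Rightarrow> 'a \<Rightarrow> complex. T \<in> CR R0 \<and> opnorm T = 1 \<and>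
       (\<forall>\<xi>. l2 \<xi> \<and> l2norm \<xi> = 1 \<and> diam_le (supp \<xi>) S \<longrightarrow> l2norm (op_apply T \<xi>) < c)"
    and F: "finite F" and S: "S > 0"
  shows "\<exists>B K. finite B \<and> B \<inter> F = {} \<and> K \<in> CR (2*R0+1) \<and> positive_op K \<and> opnorm K = 1 \<and>
     (\<forall>\<xi>. l2 \<xi> \<longrightarrow> op_apply (proj B) (op_apply K (op_apply (proj B) \<xi>)) = op_apply K \<xi>) \<and>
     (\<forall>\<xi>. l2 \<xi> \<and> l2norm \<xi> = 1 \<and> diam_le (supp \<xi>) S \<longrightarrow> l2norm (op_apply K \<xi>) \<le> c / ((1+c)/2))"
proof -
  define t where "t = (1+c)/2"
  define M :: nat where "M = nat \<lceil>8/(1-c)\<rceil> + 1"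
  define D where "D = (\<Sum>f\<in>F. \<Sum>g\<in>F. dist f g)"
  define w where "w = R0 + 1"
  define Sp where "Sp = S + D + 2 * real (4*M+2) * w"
  have D: "dist f g \<le> D" if "f \<in> F" "g \<in> F" for f g
  proof -
    have "dist f g \<le> (\<Sum>g\<in>F. dist f g)" by (rule member_le_sum) (use that F in auto)
    also have "\<dots> \<le> D" unfolding D_def
      by (rule member_le_sum[where f="\<lambda>f. \<Sum>g\<in>F. dist f g"]) (use that F in \<open>auto intro: sum_nonneg\<close>)
    finally show ?thesis .
  qed
  have D0: "D \<ge> 0" unfolding D_def by (intro sum_nonneg) auto
  have w0: "w > 0" using R0 unfolding w_def by simp
  have Sp0: "Sp > 0" unfolding Sp_def using S D0 w0 by (simp add: add_pos_nonneg)
  have SpS: "S \<le> Sp" unfolding Sp_def using D0 w0 by simp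
  have SpD: "D + 2 * real (4*M+2) * w \<le> Sp" unfolding Sp_def using S by simp
  obtain T :: "'a \<Rightarrow> 'a \<Rightarrow> complex" where T: "T \<in> CR R0" "opnorm T = 1"
    and lt: "\<And>\<xi>. l2 \<xi> \<and> l2norm \<xi> = 1 \<and> diam_le (supp \<xi>) Sp \<longrightarrow> l2norm (op_apply T \<xi>) < c"
    using H[OF Sp0] by blast
  interpret sett T R0
    by unfold_locales (use bg R0 T in \<open>auto simp: CR_def\<close>)
  have bad: "l2norm (op_apply T \<eta>) \<le> c * l2norm \<eta>" if "l2 \<eta>" "diam_le (supp \<eta>) Sp" for \<eta>
    by (rule bad_scale[OF bdd lt that])
  have M0: "M > 0" unfolding M_def by simp
  have M8: "8 / (1-c) \<le> real M" unfolding M_def using c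
    using real_nat_ceiling_ge[of "8/(1-c)"] by linarith
  have M2: "2 / real M \<le> (1-c)/4"
  proof -
    have "8 \<le> real M * (1-c)" using M8 c by (simp add: divide_le_eq)
    then show ?thesis using M0 by (simp add: divide_le_eq field_simps)
  qed
  have r1: "t + 2 / real M < 1" using M2 c unfolding t_def by argo
  obtain G0 \<zeta> where G0: "finite G0" "supp \<zeta> \<subseteq> G0" and z1: "l2norm \<zeta> \<le> 1"
    and big: "t + 2 / real M \<le> (l2norm (op_apply T \<zeta>))\<^sup>2"
    using approx[OF r1] by blast
  have c2: "c\<^sup>2 < t" unfolding t_def using c by (simp add: power2_eq_square) (smt (verit) mult_less_cancel_right2)
  obtain B \<xi>0 where B: "finite B" "B \<inter> F = {}" "supp \<xi>0 \<subseteq> B" "supp (op_apply T \<xi>0) \<subseteq> B"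
      "l2norm \<xi>0 > 0" "t * (l2norm \<xi>0)\<^sup>2 \<le> (l2norm (op_apply T \<xi>0))\<^sup>2"
    using ring[where Sp=Sp, OF F D w_def M0 SpD bad _ c2 G0 z1 big] c by auto
  have t0: "t > 0" unfolding t_def using c by simp
  obtain K where K: "K \<in> CR (2*R0+1)" "positive_op K" "opnorm K = 1"
     "\<forall>\<xi>. l2 \<xi> \<longrightarrow> op_apply (proj B) (op_apply K (op_apply (proj B) \<xi>)) = op_apply K \<xi>"
     "\<forall>\<xi>. l2 \<xi> \<and> l2norm \<xi> = 1 \<and> diam_le (supp \<xi>) Sp \<longrightarrow> l2norm (op_apply K \<xi>) \<le> c / t"
    using build[where Sp=Sp, OF B(1,3,4,5,6) t0 _ bad] c by auto
  show ?thesis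
  proof (intro exI conjI)
    show "finite B" "B \<inter> F = {}" by (fact B(1), fact B(2))
    show "K \<in> CR (2*R0+1)" "positive_op K" "opnorm K = 1" by (fact K(1), fact K(2), fact K(3))
    show "\<forall>\<xi>. l2 \<xi> \<longrightarrow> op_apply (proj B) (op_apply K (op_apply (proj B) \<xi>)) = op_apply K \<xi>" by (fact K(4))
    show "\<forall>\<xi>. l2 \<xi> \<and> l2norm \<xi> = 1 \<and> diam_le (supp \<xi>) S \<longrightarrow> l2norm (op_apply K \<xi>) \<le> c / ((1+c)/2)"
      using K(5) diam_le_mono[OF _ SpS] unfolding t_def by blast
  qed
qed



primrec Fs :: "('a set \<Rightarrow> nat \<Rightarrow> 'a set) \<Rightarrow> nat \<Rightarrow> 'a set" where
  "Fs h 0 = {}"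
| "Fs h (Suc n) = Fs h n \<union> h (Fs h n) n"

lemma Fs_mono: "m \<le> n \<Longrightarrow> Fs h m \<subseteq> Fs h n"
  by (induction n) (auto simp: le_Suc_eq)

lemma Fs_contains: "m < n \<Longrightarrow> h (Fs h m) m \<subseteq> Fs h n"
  using Fs_mono[of "Suc m" n h] by auto

theorem lemma4p2:
  assumes "bounded_geometry TYPE('a::metric_space)"
    and "\<not> ONL TYPE('a)"
  shows "\<exists>(R::real) (\<kappa>::real) (T::nat \<Rightarrow> 'a \<Rightarrow> 'a \<Rightarrow> complex) (B::nat \<Rightarrow> 'a set) (S::nat \<Rightarrow> real).
           R > 0 \<and> \<kappa> < 1 \<and>
           (\<forall>n. T n \<in> CR R) \<and> (\<forall>n. finite (B n)) \<and> (\<forall>n. S n > 0) \<and>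
           strict_mono S \<and> filterlim S at_top sequentially \<and>
           (\<forall>n. positive_op (T n) \<and> opnorm (T n) = 1) \<and>
           (\<forall>n m. n \<noteq> m \<longrightarrow> B n \<inter> B m = {}) \<and>
           (\<forall>n \<xi>. l2 \<xi> \<longrightarrow>
              op_apply (proj (B n)) (op_apply (T n) (op_apply (proj (B n)) \<xi>)) = op_apply (T n) \<xi>) \<and>
           (\<forall>n \<xi>. l2 \<xi> \<and> l2norm \<xi> = 1 \<and> diam_le (supp \<xi>) (S n) \<longrightarrow>
              l2norm (op_apply (T n) \<xi>) \<le> \<kappa>)"
proof -
  have "\<exists>R0\<ge>0. \<exists>c. 0 < c \<and> c < 1 \<and> (\<forall>S>0. \<exists>T::'a \<Rightarrow> 'a \<Rightarrow> complex. T \<in> CR R0 \<and> opnorm T = 1 \<and>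
       (\<forall>\<xi>. l2 \<xi> \<and> l2norm \<xi> = 1 \<and> diam_le (supp \<xi>) S \<longrightarrow> l2norm (op_apply T \<xi>) < c))"
    using assms(2) unfolding ONL_def not_le[symmetric] by meson
  then obtain R0 c where R0: "R0 \<ge> 0" and c: "0 < c" "c < 1"
    and HH: "\<forall>S>0. \<exists>T::'a \<Rightarrow> 'a \<Rightarrow> complex. T \<in> CR R0 \<and> opnorm T = 1 \<and>
       (\<forall>\<xi>. l2 \<xi> \<and> l2norm \<xi> = 1 \<and> diam_le (supp \<xi>) S \<longrightarrow> l2norm (op_apply T \<xi>) < c)"
    by blast
  have H: "\<And>S. S > 0 \<Longrightarrow> \<exists>T::'a \<Rightarrow> 'a \<Rightarrow> complex. T \<in> CR R0 \<and> opnorm T = 1 \<and>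
       (\<forall>\<xi>. l2 \<xi> \<and> l2norm \<xi> = 1 \<and> diam_le (supp \<xi>) S \<longrightarrow> l2norm (op_apply T \<xi>) < c)"
    using HH by blast
  define \<kappa> where "\<kappa> = c / ((1+c)/2)"
  define P where "P = (\<lambda>(F::'a set) (n::nat) (p :: 'a set \<times> ('a \<Rightarrow> 'a \<Rightarrow> complex)).
     finite (fst p) \<and> fst p \<inter> F = {} \<and> snd p \<in> CR (2*R0+1) \<and> positive_op (snd p) \<and> opnorm (snd p) = 1 \<and>
     (\<forall>\<xi>. l2 \<xi> \<longrightarrow> op_apply (proj (fst p)) (op_apply (snd p) (op_apply (proj (fst p)) \<xi>)) = op_apply (snd p) \<xi>) \<and>
     (\<forall>\<xi>. l2 \<xi> \<and> l2norm \<xi> = 1 \<and> diam_le (supp \<xi>) (real (Suc n)) \<longrightarrow> l2norm (op_apply (snd p) \<xi>) \<le> \<kappa>))"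
  have ex: "\<forall>Fn. \<exists>p. finite (fst Fn) \<longrightarrow> P (fst Fn) (snd Fn) p"
  proof
    fix Fn :: "'a set \<times> nat"
    show "\<exists>p. finite (fst Fn) \<longrightarrow> P (fst Fn) (snd Fn) p"
    proof (cases "finite (fst Fn)")
      case True
      obtain B K where "finite B \<and> B \<inter> fst Fn = {} \<and> K \<in> CR (2*R0+1) \<and> positive_op K \<and> opnorm K = 1 \<and>
         (\<forall>\<xi>. l2 \<xi> \<longrightarrow> op_apply (proj B) (op_apply K (op_apply (proj B) \<xi>)) = op_apply K \<xi>) \<and>
         (\<forall>\<xi>. l2 \<xi> \<and> l2norm \<xi> = 1 \<and> diam_le (supp \<xi>) (real (Suc (snd Fn))) \<longrightarrow> l2norm (op_apply K \<xi>) \<le> c / ((1+c)/2))"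
        using main_step[OF assms(1) R0 c H True, of "real (Suc (snd Fn))"] by auto
      then have "P (fst Fn) (snd Fn) (B, K)" unfolding P_def \<kappa>_def by simp
      then show ?thesis by blast
    qed simp
  qed
  then obtain g where g: "\<And>Fn. finite (fst Fn) \<Longrightarrow> P (fst Fn) (snd Fn) (g Fn)"
    by (metis choice)
  define h where "h = (\<lambda>F n. fst (g (F, n)))"
  define Bs where "Bs = (\<lambda>n. h (Fs h n) n)"
  define Ts where "Ts = (\<lambda>n. snd (g (Fs h n, n)))"
  have fin: "finite (Fs h n)" for n
  proof (induction n)
    case (Suc n)
    then have "P (Fs h n) n (g (Fs h n, n))" using g[of "(Fs h n, n)"] by simp
    then show ?case using Suc unfolding P_def h_def by simp
  qed simp
  have Pn: "P (Fs h n) n (g (Fs h n, n))" for n using g[of "(Fs h n, n)"] fin by simp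
  have gB: "g (Fs h n, n) = (Bs n, Ts n)" for n unfolding Bs_def Ts_def h_def by simp
  have Pn': "P (Fs h n) n (Bs n, Ts n)" for n using Pn[of n] unfolding gB .
  have disj: "Bs n \<inter> Bs m = {}" if "n \<noteq> m" for n m
  proof -
    have *: "Bs a \<inter> Bs b = {}" if "b < a" for a b
    proof -
      have "Bs b \<subseteq> Fs h a" unfolding Bs_def by (rule Fs_contains[OF that])
      moreover have "Bs a \<inter> Fs h a = {}" using Pn'[of a] unfolding P_def by simp
      ultimately show ?thesis by blast
    qed
    show ?thesis
    proof (cases "m < n")
      case True then show ?thesis using *[OF True] by simp
    next
      case False then have "n < m" using that by simp
      then show ?thesis using *[of n m] by blast
    qed
  qed
  have kappa: "\<kappa> < 1" unfolding \<kappa>_def using c by (simp add: field_simps)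
  have sm: "strict_mono (\<lambda>n. real (Suc n))" by (rule strict_monoI) simp
  have lim: "filterlim (\<lambda>n. real (Suc n)) at_top sequentially"
    by (rule filterlim_compose[OF filterlim_real_sequentially filterlim_Suc])
  show ?thesis
    apply (rule exI[of _ "2*R0+1"], rule exI[of _ \<kappa>], rule exI[of _ Ts], rule exI[of _ Bs],
        rule exI[of _ "\<lambda>n. real (Suc n)"])
    using R0 kappa Pn' disj sm lim unfolding P_def by auto
qed


end
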